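(* Let $\widehat A=\mathbb{C}[[x,y,z]]$ with maximal ideal $\widehat M=(x,y,z)$, and let $F=(f,g,h)$ be a Poisson triple on $\widehat A$ such that at most one of $f,g,h$ lies in $\widehat M$. Then $F$ is m-exact, i.e. there exist $b,d\in\widehat A$ with $F=b\,\mathrm{grad}(d)=(b d_x,b d_y,b d_z)$.
   Context: $F\in\widehat A^3$ is a Poisson triple if there is a Poisson bracket on $\widehat A$ with $\{y,z\}=f$, $\{z,x\}=g$, $\{x,y\}=h$. Subscripts denote formal partial derivatives. *)

theory Defs
  imports "HOL-Computational_Algebra.Formal_Power_Series"
begin

text \<open>The ring C[[x,y,z]] is realised as the iterated power series ring
  C[[x]][[y]][[z]] (canonically isomorphic as C-algebras).  The coefficient
  of x^i y^j z^k in f is  fps_nth (fps_nth (fps_nth f k) j) i.\<close>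

type_synonym fps3 = "complex fps fps fps"

definition X3 :: fps3 where "X3 = fps_const (fps_const fps_X)"
definition Y3 :: fps3 where "Y3 = fps_const fps_X"
definition Z3 :: fps3 where "Z3 = fps_X"

definition cst3 :: "complex \<Rightarrow> fps3" where "cst3 c = fps_const (fps_const (fps_const c))"

definition dx3 :: "fps3 \<Rightarrow> fps3" where
  "dx3 f = Abs_fps (\<lambda>k. Abs_fps (\<lambda>j. fps_deriv (fps_nth (fps_nth f k) j)))"
definition dy3 :: "fps3 \<Rightarrow> fps3" where
  "dy3 f = Abs_fps (\<lambda>k. fps_deriv (fps_nth f k))"
definition dz3 :: "fps3 \<Rightarrow> fps3" where
  "dz3 f = fps_deriv f"

definition in_max3 :: "fps3 \<Rightarrow> bool" where
  "in_max3 f \<longleftrightarrow> fps_nth (fps_nth (fps_nth f 0) 0) 0 = 0"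

definition poisson_bracket3 :: "(fps3 \<Rightarrow> fps3 \<Rightarrow> fps3) \<Rightarrow> bool" where
  "poisson_bracket3 P \<longleftrightarrow>
     (\<forall>a b c. P (a + b) c = P a c + P b c) \<and>
     (\<forall>t a b. P (cst3 t * a) b = cst3 t * P a b) \<and>
     (\<forall>a b. P a b = - P b a) \<and>
     (\<forall>a b c. P (a * b) c = a * P b c + b * P a c) \<and>
     (\<forall>a b c. P a (P b c) + P b (P c a) + P c (P a b) = 0)"

definition poisson_triple3 :: "fps3 \<Rightarrow> fps3 \<Rightarrow> fps3 \<Rightarrow> bool" where
  "poisson_triple3 f g h \<longleftrightarrow>
     (\<exists>P. poisson_bracket3 P \<and> P Y3 Z3 = f \<and> P Z3 X3 = g \<and> P X3 Y3 = h)"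

end

theory Submission imports Defs begin
unbundle fps_syntax

definition fmap :: "('a \<Rightarrow> 'b) \<Rightarrow> 'a fps \<Rightarrow> 'b fps" where
  "fmap L f = Abs_fps (\<lambda>n. L (f $ n))"

lemma fmap_nth[simp]: "fmap L f $ n = L (f $ n)"
  by (simp add: fmap_def)

definition isder :: "('a::comm_ring_1 \<Rightarrow> 'a) \<Rightarrow> bool" where
  "isder L \<longleftrightarrow> (\<forall>a b. L (a+b) = L a + L b) \<and> (\<forall>a b. L (a*b) = a * L b + L a * b)"

lemma isder_add: "isder L \<Longrightarrow> L (a+b) = L a + L b" by (simp add: isder_def)
lemma isder_mult: "isder L \<Longrightarrow> L (a*b) = a * L b + L a * b" by (simp add: isder_def)
lemma isder_0: "isder L \<Longrightarrow> L 0 = 0"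
  using isder_add[of L 0 0] by simp
lemma isder_minus: "isder L \<Longrightarrow> L (-a) = - L a"
  proof -
  assume L: "isder L"
  have "L a + L (-a) = 0" using isder_add[OF L, of a "-a"] isder_0[OF L] by simp
  then show ?thesis by (simp add: add_eq_0_iff)
qed
lemma isder_diff: "isder L \<Longrightarrow> L (a-b) = L a - L b"
  using isder_add[of L a "-b"] isder_minus[of L b] by simp
lemma isder_sum: "isder L \<Longrightarrow> L (sum f S) = (\<Sum>i\<in>S. L (f i))"
  by (induction S rule: infinite_finite_induct) (auto simp: isder_0 isder_add)
lemma isder_1: "isder L \<Longrightarrow> L 1 = 0"
  using isder_mult[of L 1 1] by simp
lemma isder_of_nat: "isder L \<Longrightarrow> L (of_nat n * a) = of_nat n * L a"
  by (induction n) (simp_all add: isder_0 isder_add algebra_simps)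

lemma isder_fps_deriv: "isder (fps_deriv :: 'a::comm_ring_1 fps \<Rightarrow> _)"
  by (simp add: isder_def)

lemma isder_fmap: assumes "isder L" shows "isder (fmap L)"
  unfolding isder_def
proof (intro conjI allI)
  fix a b :: "'a fps"
  show "fmap L (a + b) = fmap L a + fmap L b"
    by (rule fps_ext) (simp add: isder_add[OF assms])
  show "fmap L (a * b) = a * fmap L b + fmap L a * b"
    by (rule fps_ext) (simp add: fps_mult_nth isder_sum[OF assms] isder_mult[OF assms]
          sum.distrib)
qed

lemma fmap_deriv_comm: assumes "isder L"
  shows "fps_deriv (fmap L f) = fmap L (fps_deriv f)"
  by (rule fps_ext) (simp only: fps_deriv_nth fmap_nth isder_of_nat[OF assms])

function solc :: "'a::comm_ring_1 fps \<Rightarrow> ('a \<Rightarrow> 'a) \<Rightarrow> (nat \<Rightarrow> 'a) \<Rightarrow> 'a \<Rightarrow> nat \<Rightarrow> 'a" where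
  "solc a L iv c 0 = c"
| "solc a L iv c (Suc n) = iv n * (\<Sum>i=0..n. a $ i * L (solc a L iv c (n-i)))"
  by pat_completeness auto
termination by (relation "measure (\<lambda>(a,L,iv,c,n). n)") auto

lemma ode_exists:
  fixes a :: "'a::comm_ring_1 fps" and L :: "'a \<Rightarrow> 'a" and iv :: "nat \<Rightarrow> 'a"
  assumes inv: "\<And>n. of_nat (Suc n) * iv n = 1"
  shows "\<exists>u. u $ 0 = c \<and> fps_deriv u = a * fmap L u"
proof (intro exI conjI)
  let ?u = "Abs_fps (solc a L iv c)"
  show "?u $ 0 = c" by simp
  show "fps_deriv ?u = a * fmap L ?u"
  proof (rule fps_ext)
    fix n
    have "fps_deriv ?u $ n = of_nat (Suc n) * solc a L iv c (Suc n)"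
      by simp
    also have "\<dots> = (of_nat (Suc n) * iv n) * (\<Sum>i=0..n. a $ i * L (solc a L iv c (n-i)))"
      by (simp only: solc.simps mult.assoc)
    also have "\<dots> = (\<Sum>i=0..n. a $ i * L (solc a L iv c (n-i)))"
      by (simp only: inv mult_1_left)
    also have "\<dots> = (a * fmap L ?u) $ n" by (simp add: fps_mult_nth)
    finally show "fps_deriv ?u $ n = (a * fmap L ?u) $ n" .
  qed
qed

lemma ode_unique:
  fixes a :: "'a::comm_ring_1 fps" and L :: "'a \<Rightarrow> 'a" and iv :: "nat \<Rightarrow> 'a"
  assumes inv: "\<And>n. of_nat (Suc n) * iv n = 1" and L: "isder L"
    and u: "fps_deriv u = a * fmap L u" and u0: "u $ 0 = 0"
  shows "u = 0"
proof -
  have "\<forall>m\<le>n. u $ m = 0" for n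
  proof (induction n)
    case 0 then show ?case using u0 by simp
  next
    case (Suc n)
    have "of_nat (Suc n) * u $ (Suc n) = fps_deriv u $ n" by simp
    also have "\<dots> = (\<Sum>i=0..n. a $ i * L (u $ (n-i)))" by (simp add: u fps_mult_nth)
    also have "\<dots> = 0" using Suc.IH by (simp add: isder_0[OF L])
    finally have "of_nat (Suc n) * u $ (Suc n) = 0" .
    then have "iv n * (of_nat (Suc n) * u $ (Suc n)) = 0" by simp
    then have "(of_nat (Suc n) * iv n) * u $ (Suc n) = 0" by (simp only: mult.assoc mult.left_commute)
    then have "u $ (Suc n) = 0" by (simp only: inv mult_1_left)
    then show ?case using Suc.IH le_Suc_eq by auto
  qed
  then show ?thesis by (intro fps_ext) auto
qed


lemma dx3_eq: "dx3 f = fmap (fmap fps_deriv) f"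
  unfolding dx3_def fmap_def by simp
lemma dy3_eq: "dy3 f = fmap fps_deriv f"
  unfolding dy3_def fmap_def by simp

lemma isder_dx3: "isder dx3"
  using isder_fmap[OF isder_fmap[OF isder_fps_deriv]] by (simp add: dx3_eq[abs_def])
lemma isder_dy3: "isder dy3"
  using isder_fmap[OF isder_fps_deriv] by (simp add: dy3_eq[abs_def])
lemma isder_dz3: "isder dz3"
  using isder_fps_deriv by (simp add: dz3_def[abs_def])

lemma dzx: "dz3 (dx3 f) = dx3 (dz3 f)"
  unfolding dz3_def dx3_eq by (rule fmap_deriv_comm[OF isder_fmap[OF isder_fps_deriv]])
lemma dzy: "dz3 (dy3 f) = dy3 (dz3 f)"
  unfolding dz3_def dy3_eq by (rule fmap_deriv_comm[OF isder_fps_deriv])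
lemma dxy: "dx3 (dy3 f) = dy3 (dx3 f)"
  unfolding dy3_eq dx3_eq
  by (rule fps_ext) (simp add: fmap_deriv_comm[OF isder_fps_deriv])

lemma d_vals:
  "dx3 X3 = 1" "dx3 Y3 = 0" "dx3 Z3 = 0"
  "dy3 X3 = 0" "dy3 Y3 = 1" "dy3 Z3 = 0"
  "dz3 X3 = 0" "dz3 Y3 = 0" "dz3 Z3 = 1"
  "dx3 (cst3 t) = 0" "dy3 (cst3 t) = 0" "dz3 (cst3 t) = 0"
  unfolding dx3_eq dy3_eq dz3_def X3_def Y3_def Z3_def cst3_def
  by (auto intro!: fps_ext simp: fps_X_def)


definition low :: "nat \<Rightarrow> fps3 \<Rightarrow> bool" where
  "low N a \<longleftrightarrow> (\<forall>i j k. i+j+k < N \<longrightarrow> a $ k $ j $ i = 0)"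

lemma low_add: "low N a \<Longrightarrow> low N b \<Longrightarrow> low N (a + b)"
  by (simp add: low_def)
lemma low_X: assumes "low N b" shows "low (Suc N) (X3 * b)"
  unfolding low_def
proof (intro allI impI)
  fix i j k assume "i + j + k < Suc N"
  then show "(X3 * b) $ k $ j $ i = 0" using assms
    by (cases i) (auto simp: low_def X3_def)
qed
lemma low_Y: assumes "low N b" shows "low (Suc N) (Y3 * b)"
  unfolding low_def
proof (intro allI impI)
  fix i j k assume "i + j + k < Suc N"
  then show "(Y3 * b) $ k $ j $ i = 0" using assms
    by (cases j) (auto simp: low_def Y3_def)
qed
lemma low_Z: assumes "low N b" shows "low (Suc N) (Z3 * b)"
  unfolding low_def
proof (intro allI impI)
  fix i j k assume "i + j + k < Suc N"
  then show "(Z3 * b) $ k $ j $ i = 0" using assms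
    by (cases k) (auto simp: low_def Z3_def)
qed

lemma low_all: "(\<And>N. low N a) \<Longrightarrow> a = 0"
proof (rule fps_ext)
  fix k assume H: "\<And>N. low N a"
  show "a $ k = 0 $ k"
  proof (rule fps_ext)
    fix j show "a $ k $ j = 0 $ k $ j"
    proof (rule fps_ext)
      fix i show "a $ k $ j $ i = 0 $ k $ j $ i"
        using H[of "Suc (i+j+k)"] by (simp add: low_def)
    qed
  qed
qed

lemma decomp3:
  "a = cst3 (a $ 0 $ 0 $ 0) + X3 * fps_const (fps_const (Abs_fps (\<lambda>i. a $ 0 $ 0 $ Suc i)))
     + Y3 * fps_const (Abs_fps (\<lambda>j. a $ 0 $ Suc j)) + Z3 * Abs_fps (\<lambda>k. a $ Suc k)"
  (is "a = ?r")
proof (rule fps_ext)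
  fix k show "a $ k = ?r $ k"
  proof (cases "k = 0")
    case k0: True
    show ?thesis
    proof (rule fps_ext)
      fix j show "a $ k $ j = ?r $ k $ j"
      proof (cases "j = 0")
        case j0: True
        show ?thesis
        proof (rule fps_ext)
          fix i show "a $ k $ j $ i = ?r $ k $ j $ i"
            using k0 j0 by (cases i) (simp_all add: cst3_def X3_def Y3_def Z3_def)
        qed
      next
        case False
        then show ?thesis using k0
          by (cases j) (simp_all add: cst3_def X3_def Y3_def Z3_def)
      qed
    qed
  next
    case False
    then show ?thesis by (cases k) (simp_all add: cst3_def X3_def Y3_def Z3_def)
  qed
qed


lemma der3_expand:
  fixes D :: "fps3 \<Rightarrow> fps3"
  assumes add: "\<And>a b. D (a + b) = D a + D b"
    and sc: "\<And>t a. D (cst3 t * a) = cst3 t * D a"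
    and lb: "\<And>a b. D (a * b) = a * D b + b * D a"
  shows "D a = dx3 a * D X3 + dy3 a * D Y3 + dz3 a * D Z3"
proof -
  define E where "E a = D a - (dx3 a * D X3 + dy3 a * D Y3 + dz3 a * D Z3)" for a
  have D1: "D 1 = 0" using lb[of 1 1] by simp
  have Ec: "E (cst3 t) = 0" for t
    using sc[of t 1] D1 by (simp add: E_def d_vals)
  have Eadd: "E (a + b) = E a + E b" for a b
    by (simp add: E_def add isder_add[OF isder_dx3] isder_add[OF isder_dy3]
        isder_add[OF isder_dz3] algebra_simps)
  have EX: "E (X3 * b) = X3 * E b" for b
    by (simp add: E_def lb isder_mult[OF isder_dx3] isder_mult[OF isder_dy3]
        isder_mult[OF isder_dz3] d_vals algebra_simps)
  have EY: "E (Y3 * b) = Y3 * E b" for b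
    by (simp add: E_def lb isder_mult[OF isder_dx3] isder_mult[OF isder_dy3]
        isder_mult[OF isder_dz3] d_vals algebra_simps)
  have EZ: "E (Z3 * b) = Z3 * E b" for b
    by (simp add: E_def lb isder_mult[OF isder_dx3] isder_mult[OF isder_dy3]
        isder_mult[OF isder_dz3] d_vals algebra_simps)
  have "\<forall>a. low N (E a)" for N
  proof (induction N)
    case 0 then show ?case by (simp add: low_def)
  next
    case (Suc N)
    show ?case
    proof
      fix a
      have "E a = E (cst3 (a $ 0 $ 0 $ 0) + X3 * fps_const (fps_const (Abs_fps (\<lambda>i. a $ 0 $ 0 $ Suc i)))
     + Y3 * fps_const (Abs_fps (\<lambda>j. a $ 0 $ Suc j)) + Z3 * Abs_fps (\<lambda>k. a $ Suc k))"
        by (subst decomp3[of a]) (rule refl)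
      also have "\<dots> = X3 * E (fps_const (fps_const (Abs_fps (\<lambda>i. a $ 0 $ 0 $ Suc i))))
     + Y3 * E (fps_const (Abs_fps (\<lambda>j. a $ 0 $ Suc j))) + Z3 * E (Abs_fps (\<lambda>k. a $ Suc k))"
        by (simp only: Eadd EX EY EZ Ec add_0_left)
      finally show "low (Suc N) (E a)"
        using Suc.IH by (auto intro!: low_add low_X low_Y low_Z)
    qed
  qed
  then have "E a = 0" by (intro low_all) auto
  then show ?thesis by (simp add: E_def)
qed


lemma self_neg_zero: fixes x :: fps3 assumes "x = - x" shows "x = 0"
proof -
  have "(2::fps3) * x = 0" using assms by (metis mult_2 add_eq_0_iff)
  moreover have "(2::fps3) \<noteq> 0" by simp
  ultimately show ?thesis by simp
qed

definition curl0 :: "fps3 \<Rightarrow> fps3 \<Rightarrow> fps3 \<Rightarrow> bool" where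
  "curl0 f g h \<longleftrightarrow> h * dy3 f - g * dz3 f - h * dx3 g + f * dz3 g + g * dx3 h - f * dy3 h = 0"

lemma curl_cond:
  assumes "poisson_triple3 f g h" shows "curl0 f g h"
proof -
  obtain P where PB: "poisson_bracket3 P" and Pf: "P Y3 Z3 = f" and Pg: "P Z3 X3 = g"
    and Ph: "P X3 Y3 = h" using assms unfolding poisson_triple3_def by blast
  have add: "\<And>a b c. P (a + b) c = P a c + P b c"
    and sc: "\<And>t a b. P (cst3 t * a) b = cst3 t * P a b"
    and anti: "\<And>a b. P a b = - P b a"
    and lb: "\<And>a b c. P (a * b) c = a * P b c + b * P a c"
    and jac: "\<And>a b c. P a (P b c) + P b (P c a) + P c (P a b) = 0"
    using PB unfolding poisson_bracket3_def by blast+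
  have ex: "P a c = dx3 a * P X3 c + dy3 a * P Y3 c + dz3 a * P Z3 c" for a c
    by (rule der3_expand[where D = "\<lambda>a. P a c"]) (rule add, rule sc, rule lb)
  have self: "P a a = 0" for a using anti[of a a] by (rule self_neg_zero)
  have YX: "P Y3 X3 = - h" using anti[of Y3 X3] Ph by simp
  have XZ: "P X3 Z3 = - g" using anti[of X3 Z3] Pg by simp
  have ZY: "P Z3 Y3 = - f" using anti[of Z3 Y3] Pf by simp
  have 1: "P X3 f = dy3 f * h - dz3 f * g"
    using anti[of X3 f] ex[of f X3] by (simp add: self YX Pg)
  have 2: "P Y3 g = - (dx3 g * h) + dz3 g * f"
    using anti[of Y3 g] ex[of g Y3] by (simp add: self Ph ZY)
  have 3: "P Z3 h = dx3 h * g - dy3 h * f"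
    using anti[of Z3 h] ex[of h Z3] by (simp add: self XZ Pf)
  have "P X3 f + P Y3 g + P Z3 h = 0" using jac[of X3 Y3 Z3] Pf Pg Ph by simp
  then show ?thesis unfolding curl0_def 1 2 3 by (simp add: algebra_simps)
qed


lemma unit3: fixes a :: fps3 assumes "a $ 0 $ 0 $ 0 \<noteq> 0" shows "\<exists>u. u * a = 1"
proof -
  have "inverse (a $ 0 $ 0 $ 0) * a $ 0 $ 0 $ 0 = 1" using assms by simp
  then have "fps_left_inverse (a $ 0 $ 0) (inverse (a $ 0 $ 0 $ 0)) * a $ 0 $ 0 = 1"
    by (rule fps_left_inverse)
  then have "fps_left_inverse (a $ 0) (fps_left_inverse (a $ 0 $ 0) (inverse (a $ 0 $ 0 $ 0))) * a $ 0 = 1"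
    by (rule fps_left_inverse)
  then have "fps_left_inverse a (fps_left_inverse (a $ 0) (fps_left_inverse (a $ 0 $ 0) (inverse (a $ 0 $ 0 $ 0)))) * a = 1"
    by (rule fps_left_inverse)
  then show ?thesis by blast
qed

lemma iv1: "of_nat (Suc n) * fps_const (1 / of_nat (Suc n) :: complex) = 1"
  by (simp add: fps_of_nat[symmetric] fps_const_mult[symmetric] del: of_nat_Suc)
lemma iv2: "of_nat (Suc n) * fps_const (fps_const (1 / of_nat (Suc n) :: complex)) = 1"
  by (simp add: fps_of_nat[symmetric] fps_const_mult[symmetric] del: of_nat_Suc)


lemmas dX = isder_mult[OF isder_dx3] isder_add[OF isder_dx3] isder_diff[OF isder_dx3] isder_minus[OF isder_dx3]
lemmas dY = isder_mult[OF isder_dy3] isder_add[OF isder_dy3] isder_diff[OF isder_dy3] isder_minus[OF isder_dy3]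
lemmas dZ = isder_mult[OF isder_dz3] isder_add[OF isder_dz3] isder_diff[OF isder_dz3] isder_minus[OF isder_dz3]

lemma core:
  assumes C: "curl0 f g h" and fu: "\<not> in_max3 f"
  shows "\<exists>b d. f = b * dx3 d \<and> g = b * dy3 d \<and> h = b * dz3 d"
proof -
  obtain fi where fi: "fi * f = 1" using unit3 fu unfolding in_max3_def by blast
  define q where "q = g * fi"
  define r where "r = h * fi"
  have gq: "g = q * f" using fi by (simp add: q_def mult.assoc mult.commute)
  have hr: "h = r * f" using fi by (simp add: r_def mult.assoc mult.commute)
  define K where "K = dy3 r - dz3 q - q * dx3 r + r * dx3 q"
  have "f * f * K = - (h * dy3 f - g * dz3 f - h * dx3 g + f * dz3 g + g * dx3 h - f * dy3 h)"
    unfolding gq hr K_def by (simp add: dX dY dZ algebra_simps)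
  then have "f * f * K = 0" using C by (simp add: curl0_def)
  then have K0: "K = 0" using fi by auto
  obtain e :: "complex fps fps" where e0: "e $ 0 = fps_X"
    and ee: "fps_deriv e = q $ 0 * fmap fps_deriv e"
    using ode_exists[where iv = "\<lambda>n. fps_const (1 / of_nat (Suc n))", OF iv1] by blast
  obtain d :: fps3 where d0: "d $ 0 = e" and dd: "fps_deriv d = r * fmap (fmap fps_deriv) d"
    using ode_exists[where iv = "\<lambda>n. fps_const (fps_const (1 / of_nat (Suc n)))", OF iv2] by blast
  have dzd: "dz3 d = r * dx3 d" using dd by (simp add: dz3_def dx3_eq)
  define G where "G = dy3 d - q * dx3 d"
  have "dz3 G = r * dx3 G + K * dx3 d"
    unfolding G_def K_def by (simp add: dX dY dZ dzx dzy dxy dzd algebra_simps)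
  then have "fps_deriv G = r * fmap (fmap fps_deriv) G"
    by (simp add: K0 dz3_def dx3_eq)
  moreover have "G $ 0 = 0"
    unfolding G_def using ee d0 by (simp add: dy3_eq dx3_eq fps_mult_nth_0)
  ultimately have G0: "G = 0"
    by (intro ode_unique[where iv = "\<lambda>n. fps_const (fps_const (1 / of_nat (Suc n)))", OF iv2
          isder_fmap[OF isder_fps_deriv]])
  have dyd: "dy3 d = q * dx3 d" using G0 by (simp add: G_def)
  have "dx3 d $ 0 $ 0 $ 0 = 1" using d0 e0 by (simp add: dx3_eq)
  then obtain u where u: "u * dx3 d = 1" using unit3 by fastforce
  show ?thesis
  proof (intro exI conjI)
    show "f = (f * u) * dx3 d" using u by (simp add: mult.assoc)
    show "g = (f * u) * dy3 d" using u by (simp add: dyd gq mult.assoc mult.left_commute mult.commute)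
    show "h = (f * u) * dz3 d" using u by (simp add: dzd hr mult.assoc mult.left_commute mult.commute)
  qed
qed


definition swap2 :: "'a fps fps \<Rightarrow> 'a fps fps" where
  "swap2 a = Abs_fps (\<lambda>j. Abs_fps (\<lambda>i. a $ i $ j))"

lemma swap2_nth[simp]: "swap2 a $ j $ i = a $ i $ j"
  by (simp add: swap2_def)

lemma swap2_swap2[simp]: "swap2 (swap2 a) = a"
  by (intro fps_ext) simp

lemma swap2_add: "swap2 (a + b) = swap2 a + swap2 b"
  by (intro fps_ext) simp

lemma swap2_0: "swap2 0 = 0"
  by (intro fps_ext) simp

lemma swap2_mult: "swap2 (a * b) = swap2 a * swap2 (b :: 'a::comm_semiring_1 fps fps)"
proof (intro fps_ext)
  fix j i
  have "swap2 (a * b) $ j $ i = (\<Sum>p=0..i. \<Sum>q=0..j. a $ p $ q * b $ (i - p) $ (j - q))"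
    by (simp add: fps_mult_nth fps_sum_nth)
  also have "\<dots> = (\<Sum>q=0..j. \<Sum>p=0..i. a $ p $ q * b $ (i - p) $ (j - q))"
    by (rule sum.swap)
  also have "\<dots> = (swap2 a * swap2 b) $ j $ i"
    by (simp add: fps_mult_nth fps_sum_nth)
  finally show "swap2 (a * b) $ j $ i = (swap2 a * swap2 b) $ j $ i" .
qed

definition sw :: "fps3 \<Rightarrow> fps3" where "sw = fmap swap2"

lemma sw_sw[simp]: "sw (sw a) = a"
  by (intro fps_ext) (simp add: sw_def)

lemma sw_add: "sw (a + b) = sw a + sw b"
  by (rule fps_ext) (simp add: sw_def swap2_add)

lemma sw_0: "sw 0 = 0"
  by (intro fps_ext) (simp add: sw_def)

lemma sw_minus: "sw (- a) = - sw a"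
  using sw_add[of a "-a"] sw_0 by (simp add: add_eq_0_iff)

lemma sw_diff: "sw (a - b) = sw a - sw b"
  using sw_add[of a "-b"] sw_minus[of b] by simp

lemma sw_sum: "sw (sum f S) = (\<Sum>i\<in>S. sw (f i))"
  by (induction S rule: infinite_finite_induct) (auto simp: sw_0 sw_add)

lemma sw_mult: "sw (a * b) = sw a * sw b"
proof (rule fps_ext)
  fix n
  have "sw (a * b) $ n = swap2 (\<Sum>i=0..n. a $ i * b $ (n - i))"
    by (simp add: sw_def fps_mult_nth)
  also have "\<dots> = (\<Sum>i=0..n. swap2 (a $ i) * swap2 (b $ (n - i)))"
  proof -
    have "swap2 (sum h S) = (\<Sum>i\<in>S. swap2 (h i))" for h :: "nat \<Rightarrow> complex fps fps" and S
      by (induction S rule: infinite_finite_induct)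
        (auto simp: swap2_add swap2_0)
    then show ?thesis by (simp add: swap2_mult)
  qed
  also have "\<dots> = (sw a * sw b) $ n" by (simp add: sw_def fps_mult_nth)
  finally show "sw (a * b) $ n = (sw a * sw b) $ n" .
qed

lemma swap2_of_nat_mult: "swap2 (of_nat n * t) = of_nat n * swap2 (t :: complex fps fps)"
  by (intro fps_ext) (simp add: fps_of_nat[symmetric])

lemma swap2_deriv: "fmap fps_deriv (swap2 t) = swap2 (fps_deriv (t :: complex fps fps))"
  by (intro fps_ext) (simp add: fps_of_nat[symmetric])

lemma sw_dx: "dx3 (sw a) = sw (dy3 a)"
  by (rule fps_ext) (simp add: sw_def dx3_eq dy3_eq swap2_deriv)
lemma sw_dy: "dy3 (sw a) = sw (dx3 a)"
proof (rule fps_ext)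
  fix n
  have c: "fps_deriv (swap2 (a $ n)) = swap2 (fmap fps_deriv (a $ n))"
    using swap2_deriv[of "swap2 (a $ n)"] by simp
  show "dy3 (sw a) $ n = sw (dx3 a) $ n"
    unfolding sw_def dx3_eq dy3_eq fmap_nth by (rule c)
qed
lemma sw_dz: "dz3 (sw a) = sw (dz3 a)"
  by (rule fps_ext) (simp add: sw_def dz3_def swap2_of_nat_mult del: of_nat_Suc)

lemma sw_in_max: "in_max3 (sw a) = in_max3 a"
  by (simp add: in_max3_def sw_def)

lemma curl_sw: assumes "curl0 f g h" shows "curl0 (sw g) (sw f) (sw h)"
proof -
  have "sw h * dy3 (sw g) - sw f * dz3 (sw g) - sw h * dx3 (sw f) + sw g * dz3 (sw f)
      + sw f * dx3 (sw h) - sw g * dy3 (sw h)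
      = sw (- (h * dy3 f - g * dz3 f - h * dx3 g + f * dz3 g + g * dx3 h - f * dy3 h))"
    by (simp add: sw_dx sw_dy sw_dz sw_add sw_diff sw_minus sw_mult algebra_simps)
  then show ?thesis using assms by (simp add: curl0_def sw_minus sw_0)
qed

theorem lemma2p3:
  fixes f g h :: fps3
  assumes "poisson_triple3 f g h"
    and "\<not> (in_max3 f \<and> in_max3 g)" and "\<not> (in_max3 f \<and> in_max3 h)"
    and "\<not> (in_max3 g \<and> in_max3 h)"
  shows "\<exists>b d :: fps3. f = b * dx3 d \<and> g = b * dy3 d \<and> h = b * dz3 d"
proof (cases "in_max3 f")
  case False
  then show ?thesis using core curl_cond assms(1) by blast
next
  case True
  then have gu: "\<not> in_max3 (sw g)" using assms(2) by (simp add: sw_in_max)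
  obtain b d where bd: "sw g = b * dx3 d" "sw f = b * dy3 d" "sw h = b * dz3 d"
    using core[OF curl_sw[OF curl_cond[OF assms(1)]] gu] by blast
  show ?thesis
  proof (intro exI conjI)
    have "f = sw (sw f)" by simp
    also have "\<dots> = sw b * dx3 (sw d)" by (simp add: bd sw_mult sw_dx)
    finally show "f = sw b * dx3 (sw d)" .
    have "g = sw (sw g)" by simp
    also have "\<dots> = sw b * dy3 (sw d)" by (simp add: bd sw_mult sw_dy)
    finally show "g = sw b * dy3 (sw d)" .
    have "h = sw (sw h)" by simp
    also have "\<dots> = sw b * dz3 (sw d)" by (simp add: bd sw_mult sw_dz)
    finally show "h = sw b * dz3 (sw d)" .
  qed
qed

end
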